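(* Let $\mathcal{T}$ be a tower with $\mathbb{K}_0=\emptyset$ whose maps are elementary inclusions or elementary contractions, of dimension $\Delta$, with $n$ elementary inclusions, and let $\mathcal{W}$ be its contracting forest. If $N$ is an independent set of nodes of $\mathcal{W}$, then $\sum_{x\in N}|E(x)|\le(\Delta+1)\cdot n$.
   Context: Elementary inclusion: $\mathbb{K}_{i+1}=\mathbb{K}_i\cup\{\sigma\}$; elementary contraction of distinct vertices $u,v$: one of them disappears, both are mapped to the other, identity elsewhere. Dimension of the tower = maximal simplex dimension. Contracting forest: $\mathcal{W}_0=\emptyset$; if $\phi_{j-1}$ includes a simplex of dimension $>0$, $\mathcal{W}_j=\mathcal{W}_{j-1}$; if it includes a vertex $w$, $\mathcal{W}_j$ is $\mathcal{W}_{j-1}$ plus a new single-node tree labeled $w$; if it contracts $u$ and $v$, the two trees of $\mathcal{W}_{j-1}$ whose roots are labeled $u$ and $v$ are merged by making their roots the two children of a new root labeled with the image vertex. (The roots of $\mathcal{W}_j$ correspond bijectively to the vertices of $\mathbb{K}_j$.) $\mathcal{W}=\mathcal{W}_m$. Let $\Sigma$ be the collection of the $n$ simplices added at elementary inclusions; for $\sigma\in\Sigma$ added by $\phi_i$, each vertex of $\sigma$ is the label of a root of $\mathcal{W}_{i+1}$, hence corresponds to a node of $\mathcal{W}$. For a node $x$, $E(x)\subseteq\Sigma$ is the set of those $\sigma$ having at least one vertex whose corresponding node lies in the subtree of $\mathcal{W}$ rooted at $x$. A set of nodes is independent if no node in it is a proper ancestor of another. *)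

theory Defs
  imports Main
begin

text \<open>A tower starting at the empty complex is given by the list of its maps.
  Contr u v: elementary contraction of the distinct vertices u and v, where v
  disappears and both u and v are mapped to u (the image vertex is u).\<close>

datatype 'v tower_op = Incl "'v set" | Contr 'v 'v

fun apply_op :: "'v tower_op \<Rightarrow> 'v set set \<Rightarrow> 'v set set" where
  "apply_op (Incl s) K = insert s K"
| "apply_op (Contr u v) K = (\<lambda>s. (\<lambda>x. if x = v then u else x) ` s) ` K"

definition cplx :: "'v tower_op list \<Rightarrow> nat \<Rightarrow> 'v set set" where
  "cplx ops j = foldl (\<lambda>K op. apply_op op K) {} (take j ops)"

fun valid_op :: "'v set set \<Rightarrow> 'v tower_op \<Rightarrow> bool" where
  "valid_op K (Incl s) \<longleftrightarrow> finite s \<and> s \<noteq> {} \<and> s \<notin> K \<and>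
      (\<forall>t. t \<subset> s \<and> t \<noteq> {} \<longrightarrow> t \<in> K)"
| "valid_op K (Contr u v) \<longleftrightarrow> u \<noteq> v \<and> {u} \<in> K \<and> {v} \<in> K"

definition valid_tower :: "'v tower_op list \<Rightarrow> bool" where
  "valid_tower ops \<longleftrightarrow> (\<forall>i < length ops. valid_op (cplx ops i) (ops ! i))"

definition is_incl :: "'v tower_op \<Rightarrow> bool" where
  "is_incl op \<longleftrightarrow> (\<exists>s. op = Incl s)"

definition n_incl :: "'v tower_op list \<Rightarrow> nat" where
  "n_incl ops = card {i. i < length ops \<and> is_incl (ops ! i)}"

definition tower_dim :: "'v tower_op list \<Rightarrow> nat" where
  "tower_dim ops = Max (insert 0 {card s - 1 | s j. j \<le> length ops \<and> s \<in> cplx ops j})"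

text \<open>A node is identified with the index i of the map
  phi_i that created it (inclusion of a vertex, or a contraction).
  root ops j w = Some x iff w is a vertex of K_j labelling the root x of W_j.\<close>
fun root :: "'v tower_op list \<Rightarrow> nat \<Rightarrow> 'v \<Rightarrow> nat option" where
  "root ops 0 = (\<lambda>_. None)"
| "root ops (Suc i) = (case ops ! i of
      Incl s \<Rightarrow> (if card s = 1 then (root ops i)(the_elem s := Some i) else root ops i)
    | Contr u v \<Rightarrow> ((root ops i)(v := None))(u := Some i))"

definition nodes :: "'v tower_op list \<Rightarrow> nat set" where
  "nodes ops = {i. i < length ops \<and> ((\<exists>w. ops ! i = Incl {w}) \<or> (\<exists>u v. ops ! i = Contr u v))}"

definition child_rel :: "'v tower_op list \<Rightarrow> (nat \<times> nat) set" where
  "child_rel ops = {(c, p). p < length ops \<and>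
      (\<exists>u v. ops ! p = Contr u v \<and> (root ops p u = Some c \<or> root ops p v = Some c))}"

definition subtree :: "'v tower_op list \<Rightarrow> nat \<Rightarrow> nat set" where
  "subtree ops x = {y. (y, x) \<in> (child_rel ops)\<^sup>*}"

text \<open>E(x): inclusion steps i (indexing Sigma) whose simplex has a vertex whose
  corresponding node (root of W_{i+1} with that label) lies in the subtree of x.\<close>
definition E :: "'v tower_op list \<Rightarrow> nat \<Rightarrow> nat set" where
  "E ops x = {i. i < length ops \<and> (\<exists>s. ops ! i = Incl s \<and>
      (\<exists>a\<in>s. \<exists>y. root ops (Suc i) a = Some y \<and> y \<in> subtree ops x))}"

definition independent :: "'v tower_op list \<Rightarrow> nat set \<Rightarrow> bool" where
  "independent ops N \<longleftrightarrow> (\<forall>x\<in>N. \<forall>y\<in>N. (y, x) \<notin> (child_rel ops)\<^sup>+)"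

end

theory Submission
  imports Defs
begin

lemma root_lt: "root ops j w = Some c \<Longrightarrow> c < j"
proof (induction j arbitrary: w c)
  case 0 then show ?case by simp
next
  case (Suc i)
  then show ?case
    by (cases "ops ! i") (auto split: if_splits, fastforce+)
qed

lemma root_inj: "root ops j w1 = Some c \<Longrightarrow> root ops j w2 = Some c \<Longrightarrow> w1 = w2"
proof (induction j arbitrary: w1 w2 c)
  case 0 then show ?case by simp
next
  case (Suc i)
  show ?case
  proof (cases "ops ! i")
    case (Incl s)
    then show ?thesis using Suc root_lt[of ops i]
      by (auto split: if_splits; metis less_irrefl)
  next
    case (Contr u v)
    then show ?thesis using Suc root_lt[of ops i]
      by (auto split: if_splits; metis less_irrefl)
  qed
qed

lemma root_step: "root ops (Suc k) w = Some c \<Longrightarrow> c \<noteq> k \<Longrightarrow> \<exists>w'. root ops k w' = Some c"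
  by (cases "ops ! k") (auto split: if_splits)

lemma root_back: "j \<le> k \<Longrightarrow> root ops k w = Some c \<Longrightarrow> c < j \<Longrightarrow> \<exists>w'. root ops j w' = Some c"
proof (induction k arbitrary: w rule: dec_induct)
  case base then show ?case by blast
next
  case (step k)
  then obtain w' where "root ops k w' = Some c" using root_step[of ops k w c] by fastforce
  then show ?case using step by blast
qed

lemma root_gone:
  assumes "ops ! p = Contr u v" "root ops p u = Some c \<or> root ops p v = Some c"
  shows "root ops (Suc p) w \<noteq> Some c"
proof
  assume a: "root ops (Suc p) w = Some c"
  have cp: "c < p" using assms(2) root_lt by metis
  show False
  proof (cases "w = u")
    case True then show ?thesis using a assms(1) cp by simp
  next
    case False
    show ?thesis
    proof (cases "w = v")
      case True then show ?thesis using a assms(1) False by simp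
    next
      case False2: False
      then have "root ops p w = Some c" using a assms(1) \<open>w \<noteq> u\<close> by simp
      then show ?thesis using assms(2) root_inj False2 \<open>w \<noteq> u\<close> by metis
    qed
  qed
qed

lemma child_sv: "single_valued (child_rel ops)"
proof (rule single_valuedI)
  have main: False if h1: "(c, p1) \<in> child_rel ops" and h2: "(c, p2) \<in> child_rel ops" and h3: "p1 < p2" for c p1 p2
  proof -
    have "\<exists>u1 v1. ops ! p1 = Contr u1 v1 \<and> (root ops p1 u1 = Some c \<or> root ops p1 v1 = Some c)"
      using h1 by (simp add: child_rel_def)
    then obtain u1 v1 where 1: "ops ! p1 = Contr u1 v1" "root ops p1 u1 = Some c \<or> root ops p1 v1 = Some c"
      by blast
    obtain w where w: "root ops p2 w = Some c"
      using h2 unfolding child_rel_def by auto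
    have "c < p1" using 1(2) root_lt by metis
    then obtain w' where "root ops (Suc p1) w' = Some c"
      using root_back[of "Suc p1" p2 ops w c] w h3 by auto
    then show False using root_gone[OF 1] by blast
  qed
  fix x y z assume "(x, y) \<in> child_rel ops" "(x, z) \<in> child_rel ops"
  then show "y = z" using main by (metis linorder_neqE_nat)
qed

lemma subtree_unique:
  assumes "independent ops N" "x1 \<in> N" "x2 \<in> N" "y \<in> subtree ops x1" "y \<in> subtree ops x2"
  shows "x1 = x2"
proof (rule ccontr)
  assume ne: "x1 \<noteq> x2"
  have "(x1, x2) \<in> (child_rel ops)\<^sup>* \<or> (x2, x1) \<in> (child_rel ops)\<^sup>*"
    using single_valued_confluent[OF child_sv] assms(4,5) unfolding subtree_def by blast
  then have "(x1, x2) \<in> (child_rel ops)\<^sup>+ \<or> (x2, x1) \<in> (child_rel ops)\<^sup>+"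
    using ne by (auto simp: rtrancl_eq_or_trancl)
  then show False using assms(1-3) unfolding independent_def by blast
qed

lemma finite_fold: "finite K \<Longrightarrow> finite (foldl (\<lambda>K op. apply_op op K) K xs)"
proof (induction xs arbitrary: K)
  case Nil then show ?case by simp
next
  case (Cons a xs)
  show ?case using Cons by (cases a) auto
qed

lemma finite_cplx: "finite (cplx ops j)"
  unfolding cplx_def by (rule finite_fold) simp

lemma cplx_Suc: "i < length ops \<Longrightarrow> cplx ops (Suc i) = apply_op (ops ! i) (cplx ops i)"
  unfolding cplx_def by (simp add: take_Suc_conv_app_nth)

lemma card_le_dim:
  assumes "i < length ops" "ops ! i = Incl s"
  shows "card s \<le> tower_dim ops + 1"
proof -
  have sin: "s \<in> cplx ops (Suc i)" using cplx_Suc[OF assms(1)] assms(2) by simp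
  let ?S = "{card s - 1 | s j. j \<le> length ops \<and> s \<in> cplx ops j}"
  have "?S \<subseteq> (\<lambda>s. card s - 1) ` (\<Union>j\<in>{..length ops}. cplx ops j)" by auto
  then have fin: "finite ?S" by (rule finite_subset) (simp add: finite_cplx)
  have "card s - 1 \<in> ?S" using sin assms(1) by (intro CollectI exI[of _ s] exI[of _ "Suc i"]) auto
  then have "card s - 1 \<le> tower_dim ops" unfolding tower_dim_def using fin by simp
  then show ?thesis by simp
qed

theorem lemma7:
  fixes ops :: "'v tower_op list" and N :: "nat set"
  assumes "valid_tower ops"
    and "N \<subseteq> nodes ops"
    and "independent ops N"
  shows "(\<Sum>x\<in>N. card (E ops x)) \<le> (tower_dim ops + 1) * n_incl ops"
proof -
  define I where "I = {i. i < length ops \<and> is_incl (ops ! i)}"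
  have finI: "finite I" unfolding I_def by simp
  have finN: "finite N" using assms(2) unfolding nodes_def
    by (rule finite_subset) (rule finite_subset[of _ "{..<length ops}"], auto)
  have EI: "E ops x \<subseteq> I" for x unfolding E_def I_def is_incl_def by auto
  have "(\<Sum>x\<in>N. card (E ops x)) = (\<Sum>x\<in>N. \<Sum>i\<in>I. if i \<in> E ops x then 1 else 0)"
  proof (rule sum.cong[OF refl])
    fix x
    have "E ops x = {i\<in>I. i \<in> E ops x}" using EI by auto
    then have "card (E ops x) = (\<Sum>i\<in>{i\<in>I. i \<in> E ops x}. 1)" by simp
    also have "\<dots> = (\<Sum>i\<in>I. if i \<in> E ops x then 1 else 0)"
      using finI by (simp add: sum.inter_filter[symmetric])
    finally show "card (E ops x) = (\<Sum>i\<in>I. if i \<in> E ops x then 1 else 0)" .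
  qed
  also have "\<dots> = (\<Sum>i\<in>I. \<Sum>x\<in>N. if i \<in> E ops x then 1 else 0)" by (rule sum.swap)
  also have "\<dots> = (\<Sum>i\<in>I. card {x\<in>N. i \<in> E ops x})"
    using finN by (simp add: sum.inter_filter[symmetric])
  also have "\<dots> \<le> of_nat (card I) * (tower_dim ops + 1)"
  proof (rule sum_bounded_above)
    fix i assume iI: "i \<in> I"
    then obtain s where s: "i < length ops" "ops ! i = Incl s"
      unfolding I_def is_incl_def by auto
    have fs: "finite s" using assms(1) s unfolding valid_tower_def by (metis valid_op.simps(1))
    define f where "f a = (THE x. x \<in> N \<and> (\<exists>y. root ops (Suc i) a = Some y \<and> y \<in> subtree ops x))" for a
    have "{x\<in>N. i \<in> E ops x} \<subseteq> f ` s"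
    proof
      fix x assume "x \<in> {x\<in>N. i \<in> E ops x}"
      then have xN: "x \<in> N" and "i \<in> E ops x" by auto
      then obtain a y where a: "a \<in> s" "root ops (Suc i) a = Some y" "y \<in> subtree ops x"
        unfolding E_def using s by auto
      have "f a = x" unfolding f_def
        using subtree_unique[OF assms(3)] xN a by (intro the_equality) auto
      then show "x \<in> f ` s" using a by blast
    qed
    then have "card {x\<in>N. i \<in> E ops x} \<le> card (f ` s)" by (intro card_mono) (auto simp: fs)
    also have "\<dots> \<le> card s" by (rule card_image_le[OF fs])
    also have "\<dots> \<le> tower_dim ops + 1" by (rule card_le_dim[OF s])
    finally show "card {x\<in>N. i \<in> E ops x} \<le> tower_dim ops + 1" .
  qed
  also have "\<dots> = (tower_dim ops + 1) * n_incl ops" unfolding n_incl_def I_def by simp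
  finally show ?thesis .
qed

end
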